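(* Let $C\subseteq\{0,1\}^m$ be a code, let $C'\subseteq C$ with $\mathrm{CL}(C')=\ell$, and let $T=\mathrm{Supp}(C')$. Then $\mathrm{CL}(C|_{\bar T})\le \mathrm{CL}(C)-\ell$.
   Context: For $S\subseteq[m]$, $C|_S=\{c|_S : c\in C\}\subseteq\{0,1\}^S$, and $\bar T=[m]\setminus T$. $\mathrm{Supp}(C')=\{i\in[m] : \exists c\in C',\ c_i\neq 0\}$. A chain of length $\ell$ in a code $D\subseteq\{0,1\}^A$ is a pair of injective maps $a:[\ell]\to A$ and $c:[\ell]\to D$ such that $c(i)_{a(i)}=1$ for all $i$, and $c(i)_{a(j)}=0$ for all $1\le i<j\le\ell$; the chain length $\mathrm{CL}(D)$ is the maximum length of a chain in $D$ ($0$ if none exists). *)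

theory Defs
  imports Main
begin

text \<open>Binary words indexed by a set A of coordinates (subset of nat) are represented as
  functions nat => bool that are False outside A (True = 1, False = 0).\<close>

definition cube :: "nat set \<Rightarrow> (nat \<Rightarrow> bool) set" where
  "cube A = {c. \<forall>i. c i \<longrightarrow> i \<in> A}"

definition restr :: "nat set \<Rightarrow> (nat \<Rightarrow> bool) set \<Rightarrow> (nat \<Rightarrow> bool) set" where
  "restr S C = (\<lambda>c i. i \<in> S \<and> c i) ` C"

definition Supp :: "nat set \<Rightarrow> (nat \<Rightarrow> bool) set \<Rightarrow> nat set" where
  "Supp A C' = {i \<in> A. \<exists>c\<in>C'. c i}"

definition is_chain :: "nat set \<Rightarrow> (nat \<Rightarrow> bool) set \<Rightarrow> nat \<Rightarrow> (nat \<Rightarrow> nat) \<Rightarrow> (nat \<Rightarrow> (nat \<Rightarrow> bool)) \<Rightarrow> bool" where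
  "is_chain A D l a c \<longleftrightarrow>
     inj_on a {1..l} \<and> a ` {1..l} \<subseteq> A \<and>
     inj_on c {1..l} \<and> c ` {1..l} \<subseteq> D \<and>
     (\<forall>i\<in>{1..l}. c i (a i)) \<and>
     (\<forall>i\<in>{1..l}. \<forall>j\<in>{1..l}. i < j \<longrightarrow> \<not> c i (a j))"

text \<open>Chain length: maximum length of a chain (0 if none; the empty chain always exists).\<close>
definition CL :: "nat set \<Rightarrow> (nat \<Rightarrow> bool) set \<Rightarrow> nat" where
  "CL A D = Max {l. \<exists>a c. is_chain A D l a c}"

end

theory Submission
  imports Defs
begin

lemma chain_le_card:
  assumes "finite A" "is_chain A D L a c"
  shows "L \<le> card A"
proof -
  have "card (a ` {1..L}) = L" using assms(2) unfolding is_chain_def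
    by (simp add: card_image)
  moreover have "card (a ` {1..L}) \<le> card A"
    using assms unfolding is_chain_def by (simp add: card_mono)
  ultimately show ?thesis by simp
qed

lemma chain_set_fin:
  assumes "finite A"
  shows "finite {l. \<exists>a c. is_chain A D l a c}" "{l. \<exists>a c. is_chain A D l a c} \<noteq> {}"
proof -
  show "finite {l. \<exists>a c. is_chain A D l a c}"
    by (rule finite_subset[of _ "{..card A}"]) (use chain_le_card[OF assms] in auto)
  have "is_chain A D 0 id (\<lambda>_ _. False)" unfolding is_chain_def by auto
  then show "{l. \<exists>a c. is_chain A D l a c} \<noteq> {}" by blast
qed

lemma CL_attained:
  assumes "finite A"
  shows "\<exists>a c. is_chain A D (CL A D) a c"
proof -
  have "CL A D \<in> {l. \<exists>a c. is_chain A D l a c}"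
    unfolding CL_def using chain_set_fin[OF assms] by (rule Max_in)
  then show ?thesis by simp
qed

lemma CL_ge:
  assumes "finite A" "is_chain A D L a c"
  shows "L \<le> CL A D"
  unfolding CL_def using chain_set_fin[OF assms(1)] assms(2) by (intro Max_ge) auto

theorem mainTheorem5:
  fixes m l :: nat and C C' :: "(nat \<Rightarrow> bool) set"
  assumes "C \<subseteq> cube {1..m}"
    and "C' \<subseteq> C"
    and "CL {1..m} C' = l"
  shows "CL ({1..m} - Supp {1..m} C') (restr ({1..m} - Supp {1..m} C') C) + l \<le> CL {1..m} C"
proof -
  define T where "T = Supp {1..m} C'"
  define B where "B = {1..m} - T"
  define k where "k = CL B (restr B C)"
  obtain a1 c1 where ch1: "is_chain {1..m} C' l a1 c1"
    using CL_attained[of "{1..m}" C'] assms(3) by auto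
  obtain a2 c2 where ch2: "is_chain B (restr B C) k a2 c2"
    using CL_attained[of B "restr B C"] unfolding k_def B_def by auto
  have incube: "\<And>x i. x \<in> C \<Longrightarrow> x i \<Longrightarrow> i \<in> {1..m}"
    using assms(1) unfolding cube_def by blast
  have "\<forall>j\<in>{1..k}. \<exists>x. x \<in> C \<and> c2 j = (\<lambda>i. i \<in> B \<and> x i)"
    using ch2 unfolding is_chain_def restr_def by blast
  then obtain d where d: "\<And>j. j\<in>{1..k} \<Longrightarrow> d j \<in> C \<and> c2 j = (\<lambda>i. i \<in> B \<and> d j i)"
    by metis
  have a1T: "a1 j \<in> T" if "j \<in> {1..l}" for j
    using ch1 that unfolding is_chain_def T_def Supp_def by blast
  have a2B: "a2 j \<in> B" if "j \<in> {1..k}" for j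
    using ch2 that unfolding is_chain_def by blast
  have d1: "d j (a2 j)" if "j \<in> {1..k}" for j
    using ch2 that d[OF that] unfolding is_chain_def by metis
  have d2: "\<not> d i (a2 j)" if "i \<in> {1..k}" "j \<in> {1..k}" "i < j" for i j
    using ch2 that d[OF that(1)] a2B[OF that(2)] unfolding is_chain_def by metis
  have c1a2: "\<not> c1 i (a2 j)" if "i \<in> {1..l}" "j \<in> {1..k}" for i j
  proof
    assume h: "c1 i (a2 j)"
    have "c1 i \<in> C'" using ch1 that unfolding is_chain_def by blast
    then have "a2 j \<in> T" using h a2B[OF that(2)] unfolding T_def Supp_def B_def by blast
    then show False using a2B[OF that(2)] unfolding B_def by blast
  qed
  have a1i1: "inj_on a1 {1..l}" using ch1 unfolding is_chain_def by blast
  have a1i2: "a1 j \<in> {1..m}" if "j \<in> {1..l}" for j using ch1 that unfolding is_chain_def by blast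
  have a1i3: "inj_on c1 {1..l}" using ch1 unfolding is_chain_def by blast
  have a1i4: "c1 j \<in> C" if "j \<in> {1..l}" for j using ch1 assms(2) that unfolding is_chain_def by blast
  have a1i5: "c1 j (a1 j)" if "j \<in> {1..l}" for j using ch1 that unfolding is_chain_def by blast
  have a1i6: "\<not> c1 i (a1 j)" if "i \<in> {1..l}" "j \<in> {1..l}" "i < j" for i j
    using ch1 that unfolding is_chain_def by blast
  note a1i = a1i1 a1i2 a1i3 a1i4 a1i5 a1i6
  have a2i: "inj_on a2 {1..k}" using ch2 unfolding is_chain_def by auto
  have dinj: "inj_on d {1..k}"
  proof (rule inj_onI)
    fix x y assume "x \<in> {1..k}" "y \<in> {1..k}" "d x = d y"
    then have "c2 x = c2 y" using d by metis
    then show "x = y" using ch2 \<open>x \<in> {1..k}\<close> \<open>y \<in> {1..k}\<close> unfolding is_chain_def inj_on_def by blast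
  qed
  have TB: "T \<inter> B = {}" unfolding B_def by blast
  define a where "a i = (if i \<le> l then a1 i else a2 (i - l))" for i
  define c where "c i = (if i \<le> l then c1 i else d (i - l))" for i
  have aL: "a i = a1 i" if "i \<le> l" for i using that by (simp add: a_def)
  have aR: "a i = a2 (i - l)" if "\<not> i \<le> l" for i using that by (simp add: a_def)
  have cL: "c i = c1 i" if "i \<le> l" for i using that by (simp add: c_def)
  have cR: "c i = d (i - l)" if "\<not> i \<le> l" for i using that by (simp add: c_def)
  have idx: "i - l \<in> {1..k}" if "i \<in> {1..l+k}" "\<not> i \<le> l" for i
    using that by auto
  have idxL: "i \<in> {1..l}" if "i \<in> {1..l+k}" "i \<le> l" for i
    using that by auto
  have subst: "x = y" if "\<not> x \<le> l" "\<not> y \<le> l" "x - l = y - l" for x y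
    using that by arith
  have "is_chain {1..m} C (l + k) a c"
    unfolding is_chain_def
  proof (intro conjI)
    show "inj_on a {1..l + k}"
    proof (rule inj_onI)
      fix x y assume x: "x \<in> {1..l+k}" and y: "y \<in> {1..l+k}" and e: "a x = a y"
      show "x = y"
      proof (cases "x \<le> l"; cases "y \<le> l")
        assume h: "x \<le> l" "y \<le> l"
        then have "a1 x = a1 y" using e aL by metis
        then show ?thesis using inj_onD[OF a1i1 _ idxL[OF x h(1)] idxL[OF y h(2)]] by blast
      next
        assume h: "x \<le> l" "\<not> y \<le> l"
        have "a1 x \<in> T" by (rule a1T[OF idxL[OF x h(1)]])
        moreover have "a2 (y - l) \<in> B" by (rule a2B[OF idx[OF y h(2)]])
        ultimately show ?thesis using e aL[OF h(1)] aR[OF h(2)] TB by auto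
      next
        assume h: "\<not> x \<le> l" "y \<le> l"
        have "a1 y \<in> T" by (rule a1T[OF idxL[OF y h(2)]])
        moreover have "a2 (x - l) \<in> B" by (rule a2B[OF idx[OF x h(1)]])
        ultimately show ?thesis using e aL[OF h(2)] aR[OF h(1)] TB by auto
      next
        assume h: "\<not> x \<le> l" "\<not> y \<le> l"
        then have "a2 (x - l) = a2 (y - l)" using e aR by metis
        then have "x - l = y - l" using inj_onD[OF a2i _ idx[OF x h(1)] idx[OF y h(2)]] by blast
        then show ?thesis using subst h by blast
      qed
    qed
    show "a ` {1..l + k} \<subseteq> {1..m}"
    proof
      fix z assume "z \<in> a ` {1..l + k}"
      then obtain i where i: "i \<in> {1..l+k}" "z = a i" by blast
      show "z \<in> {1..m}"
      proof (cases "i \<le> l")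
        case True then show ?thesis using i a1i2[OF idxL[OF i(1) True]] aL by metis
      next
        case False then show ?thesis using i a2B[OF idx[OF i(1) False]] aR unfolding B_def by auto
      qed
    qed
    show "inj_on c {1..l + k}"
    proof (rule inj_onI)
      fix x y assume x: "x \<in> {1..l+k}" and y: "y \<in> {1..l+k}" and e: "c x = c y"
      show "x = y"
      proof (cases "x \<le> l"; cases "y \<le> l")
        assume h: "x \<le> l" "y \<le> l"
        then have "c1 x = c1 y" using e cL by metis
        then show ?thesis using inj_onD[OF a1i3 _ idxL[OF x h(1)] idxL[OF y h(2)]] by blast
      next
        assume h: "x \<le> l" "\<not> y \<le> l"
        have "c1 x = d (y - l)" using e cL[OF h(1)] cR[OF h(2)] by simp
        then show ?thesis using c1a2[OF idxL[OF x h(1)] idx[OF y h(2)]] d1[OF idx[OF y h(2)]] by simp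
      next
        assume h: "\<not> x \<le> l" "y \<le> l"
        have "c1 y = d (x - l)" using e cL[OF h(2)] cR[OF h(1)] by simp
        then show ?thesis using c1a2[OF idxL[OF y h(2)] idx[OF x h(1)]] d1[OF idx[OF x h(1)]] by simp
      next
        assume h: "\<not> x \<le> l" "\<not> y \<le> l"
        then have "d (x - l) = d (y - l)" using e cR by metis
        then have "x - l = y - l" using inj_onD[OF dinj _ idx[OF x h(1)] idx[OF y h(2)]] by blast
        then show ?thesis using subst h by blast
      qed
    qed
    show "c ` {1..l + k} \<subseteq> C"
    proof
      fix z assume "z \<in> c ` {1..l + k}"
      then obtain i where i: "i \<in> {1..l+k}" "z = c i" by blast
      show "z \<in> C"
      proof (cases "i \<le> l")
        case True then show ?thesis using i a1i4[OF idxL[OF i(1) True]] cL by metis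
      next
        case False then show ?thesis using i d[OF idx[OF i(1) False]] cR by metis
      qed
    qed
    show "\<forall>i\<in>{1..l + k}. c i (a i)"
    proof
      fix i assume i: "i \<in> {1..l+k}"
      show "c i (a i)"
      proof (cases "i \<le> l")
        case True then show ?thesis using a1i5[OF idxL[OF i True]] cL aL by metis
      next
        case False then show ?thesis using d1[OF idx[OF i False]] cR aR by metis
      qed
    qed
    show "\<forall>i\<in>{1..l + k}. \<forall>j\<in>{1..l + k}. i < j \<longrightarrow> \<not> c i (a j)"
    proof (intro ballI impI)
      fix i j assume i: "i \<in> {1..l+k}" and j: "j \<in> {1..l+k}" and ij: "i < j"
      show "\<not> c i (a j)"
      proof (cases "i \<le> l"; cases "j \<le> l")
        assume h: "i \<le> l" "j \<le> l" then show ?thesis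
          using a1i6[OF idxL[OF i h(1)] idxL[OF j h(2)] ij] cL aL by metis
      next
        assume h: "i \<le> l" "\<not> j \<le> l" then show ?thesis
          using c1a2[OF idxL[OF i h(1)] idx[OF j h(2)]] cL aR by metis
      next
        assume "\<not> i \<le> l" "j \<le> l" then show ?thesis using ij by simp
      next
        assume h: "\<not> i \<le> l" "\<not> j \<le> l"
        have "i - l < j - l" using h ij by arith
        then show ?thesis
          using d2[OF idx[OF i h(1)] idx[OF j h(2)]] cR[OF h(1)] aR[OF h(2)] by simp
      qed
    qed
  qed
  then have "l + k \<le> CL {1..m} C" by (rule CL_ge[rotated]) simp
  then show ?thesis unfolding k_def B_def T_def by simp
qed

end
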